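(* Suppose the $L$-smoothness assumption and the PL-condition with constant $\mu>0$ hold, and let $\{w_t\}_{t\ge0}$, $\{v_t\}_{t\ge0}$, $\{\hat D_t\}_{t\ge0}$ be generated by {\tt Scaled SARAH} with any step-size $\eta>0$. Then for every $t\ge0$, $$P(w_{t+1})-P^*\le\left(1-\frac{\eta\mu}{\Gamma}\right)(P(w_t)-P^* )+\frac{\eta}{2\alpha}\|\nabla P(w_t)-v_t\|^2-\left(\frac1{2\eta}-\frac{L}{2\alpha}\right)\|w_{t+1}-w_t\|^2_{\hat D_t}.$$
   Context: $P=\frac1n\sum_{i=1}^nf_i$ with $f_i:\mathbb{R}^d\to\mathbb{R}$, assumed to have a minimizer $w^*$, $P^*=P(w^* )$. $L$-smoothness assumption: each $f_i$ and $P$ are twice differentiable with $L$-Lipschitz gradients. PL-condition: $\|\nabla P(w)\|^2\ge2\mu(P(w)-P^* )$ for all $w$. $\Gamma=\sqrt d\,L$. $\|x\|_D^2=x^TDx$. For $J\subseteq[n]$, $\nabla^2P_J(w)=\frac1{|J|}\sum_{j\in J}\nabla^2 f_j(w)$; $\odot$ is the Hadamard product; $\mathrm{diag}(x)$ is the diagonal matrix with the entries of $x$. Preconditioner (parameters $\alpha>0$, $\beta\in(0,1)$, $m\ge1$): $D_0=\frac1m\sum_{j=1}^m\mathrm{diag}(z_j\odot\nabla^2P_{\mathcal{J}_j}(w_0)z_j)$, $D_t=\beta D_{t-1}+(1-\beta)\mathrm{diag}(z_t\odot\nabla^2P_{\mathcal{J}_t}(w_t)z_t)$ for $t\ge1$,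 with independent Rademacher vectors $z$ and random index sets $\mathcal{J}\subseteq[n]$; $\hat D_t$ diagonal with $(\hat D_t)_{ii}=\max\{\alpha,|(D_t)_{ii}|\}$. {\tt Scaled SARAH} (input $w_0$, $\eta$, $p\in(0,1]$): $v_0=\nabla P(w_0)$; for $t\ge0$: $w_{t+1}=w_t-\eta\hat D_t^{-1}v_t$; draw $i_{t+1}$ uniformly from $[n]$; with probability $p$, $v_{t+1}=\nabla P(w_{t+1})$, otherwise $v_{t+1}=v_t+\nabla f_{i_{t+1}}(w_{t+1})-\nabla f_{i_{t+1}}(w_t)$; update $\hat D_{t+1}$.
   Formalization: The preconditioner parameter alpha satisfies alpha <= Gamma = sqrt(d) L besides alpha > 0. The paper assumes this as well. *)

theory Defs
  imports "HOL-Analysis.Analysis"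
begin

definition avg_fun :: "nat \<Rightarrow> (nat \<Rightarrow> 'a \<Rightarrow> real) \<Rightarrow> 'a \<Rightarrow> real" where
  "avg_fun n f x = (1 / real n) * (\<Sum>i<n. f i x)"

definition avg_grad :: "nat \<Rightarrow> (nat \<Rightarrow> 'a \<Rightarrow> real^'d) \<Rightarrow> 'a \<Rightarrow> real^'d" where
  "avg_grad n g x = (1 / real n) *\<^sub>R (\<Sum>i<n. g i x)"

definition hessJ :: "(nat \<Rightarrow> real^'d \<Rightarrow> real^'d^'d) \<Rightarrow> nat set \<Rightarrow> real^'d \<Rightarrow> real^'d^'d" where
  "hessJ H J x = (1 / real (card J)) *\<^sub>R (\<Sum>j\<in>J. H j x)"

text \<open>Diagonal of diag(z \<odot> A z), stored as a vector.\<close>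
definition hutch :: "real^'d^'d \<Rightarrow> real^'d \<Rightarrow> real^'d" where
  "hutch A z = (\<chi> k. z $ k * (A *v z) $ k)"

text \<open>Weighted squared norm ||x||_D^2 = x^T D x for the diagonal matrix D with diagonal vector Dv.\<close>
definition wnorm2 :: "real^'d \<Rightarrow> real^'d \<Rightarrow> real" where
  "wnorm2 Dv x = (\<Sum>k\<in>UNIV. Dv $ k * (x $ k)^2)"

end

theory Submission
  imports Defs
begin

lemma opbound:
  fixes G :: "real^'d \<Rightarrow> real^'d" and M :: "real^'d^'d"
  assumes der: "(G has_derivative (\<lambda>h. M *v h)) (at x)"
    and lip: "\<forall>x y. norm (G x - G y) \<le> L * norm (x - y)"
  shows "norm (M *v h) \<le> L * norm h"
proof -
  define c where "c = M *v h"
  define \<phi> where "\<phi> = (\<lambda>s::real. c \<bullet> G (x + s *\<^sub>R h))"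
  have d1: "((\<lambda>s::real. x + s *\<^sub>R h) has_derivative (\<lambda>s. s *\<^sub>R h)) (at 0)"
    by (auto intro!: derivative_eq_intros)
  have d2: "(G has_derivative (\<lambda>h. M *v h)) (at (x + 0 *\<^sub>R h))" using der by simp
  have d3: "((\<lambda>s. G (x + s *\<^sub>R h)) has_derivative (\<lambda>s. M *v (s *\<^sub>R h))) (at 0)"
    using has_derivative_compose[OF d1 d2] by (simp add: o_def)
  have d4: "(\<phi> has_derivative (\<lambda>s. c \<bullet> (M *v (s *\<^sub>R h)))) (at 0)"
    unfolding \<phi>_def using d3 by (auto intro!: derivative_eq_intros)
  have "(\<lambda>s. c \<bullet> (M *v (s *\<^sub>R h))) = (*) (c \<bullet> c)"
    by (auto simp: c_def matrix_vector_mult_scaleR algebra_simps)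
  with d4 have "(\<phi> has_field_derivative (c \<bullet> c)) (at 0)"
    by (simp add: has_field_derivative_def)
  then have lim: "((\<lambda>s. (\<phi> s - \<phi> 0) / (s - 0)) \<longlongrightarrow> c \<bullet> c) (at 0)"
    by (simp add: has_field_derivative_iff)
  have ev: "eventually (\<lambda>s. (\<phi> s - \<phi> 0) / (s - 0) \<le> norm c * (L * norm h)) (at 0)"
  proof (rule eventuallyI)
    fix s :: real
    show "(\<phi> s - \<phi> 0) / (s - 0) \<le> norm c * (L * norm h)"
    proof (cases "s = 0")
      case True
      have "0 \<le> L * norm (h - 0)" using lip[rule_format, of h 0] norm_ge_zero order_trans by blast
      then show ?thesis using True by simp
    next
      case False
      have "\<phi> s - \<phi> 0 = c \<bullet> (G (x + s *\<^sub>R h) - G x)" by (simp add: \<phi>_def inner_diff_right)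
      also have "\<dots> \<le> norm c * norm (G (x + s *\<^sub>R h) - G x)" by (rule norm_cauchy_schwarz)
      also have "\<dots> \<le> norm c * (L * norm (s *\<^sub>R h))"
        using lip[rule_format, of "x + s *\<^sub>R h" x] by (simp add: mult_left_mono)
      finally have A: "\<phi> s - \<phi> 0 \<le> norm c * (L * norm h) * \<bar>s\<bar>" by (simp add: algebra_simps)
      have B: "-(\<phi> s - \<phi> 0) \<le> norm c * (L * norm h) * \<bar>s\<bar>"
      proof -
        have "-(\<phi> s - \<phi> 0) = c \<bullet> (G x - G (x + s *\<^sub>R h))" by (simp add: \<phi>_def inner_diff_right)
        also have "\<dots> \<le> norm c * norm (G x - G (x + s *\<^sub>R h))" by (rule norm_cauchy_schwarz)
        also have "\<dots> \<le> norm c * (L * norm (s *\<^sub>R h))"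
          using lip[rule_format, of x "x + s *\<^sub>R h"] by (simp add: mult_left_mono)
        finally show ?thesis by (simp add: algebra_simps)
      qed
      have C: "\<bar>\<phi> s - \<phi> 0\<bar> \<le> norm c * (L * norm h) * \<bar>s\<bar>"
        using A B by (simp add: abs_le_iff)
      have "\<bar>(\<phi> s - \<phi> 0) / s\<bar> = \<bar>\<phi> s - \<phi> 0\<bar> / \<bar>s\<bar>" by (simp add: abs_divide)
      also have "\<dots> \<le> norm c * (L * norm h)"
        using C False by (simp add: pos_divide_le_eq)
      finally have "\<bar>(\<phi> s - \<phi> 0) / s\<bar> \<le> norm c * (L * norm h)" .
      then show ?thesis by (smt (verit) diff_zero)
    qed
  qed
  have "c \<bullet> c \<le> norm c * (L * norm h)"
    using tendsto_upperbound[OF lim ev] by simp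
  then have cc: "norm c * norm c \<le> norm c * (L * norm h)"
    by (simp add: power2_norm_eq_inner[symmetric] power2_eq_square)
  have Lh: "0 \<le> L * norm h"
  proof -
    have "norm (G h - G 0) \<le> L * norm (h - 0)" using lip by blast
    moreover have "0 \<le> norm (G h - G 0)" by simp
    ultimately show ?thesis by (simp del: norm_ge_zero)
  qed
  have "norm c \<le> L * norm h"
  proof (cases "norm c = 0")
    case True
    then show ?thesis using Lh by simp
  next
    case False
    then have pos: "norm c > 0" by simp
    show ?thesis using cc mult_le_cancel_left_pos[OF pos, of "norm c" "L * norm h"] by simp
  qed
  then show ?thesis by (simp add: c_def)
qed


lemma descent:
  fixes F :: "real^'d \<Rightarrow> real" and G :: "real^'d \<Rightarrow> real^'d"
  assumes der: "\<forall>x. (F has_derivative (\<lambda>h. G x \<bullet> h)) (at x)"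
    and lip: "\<forall>x y. norm (G x - G y) \<le> L * norm (x - y)"
  shows "F y \<le> F x + G x \<bullet> (y - x) + L / 2 * (norm (y - x))^2"
proof -
  define d where "d = y - x"
  define \<phi> where "\<phi> = (\<lambda>s::real. F (x + s *\<^sub>R d) - s * (G x \<bullet> d) - L / 2 * s^2 * (norm d)^2)"
  have D: "(\<phi> has_real_derivative (G (x + s *\<^sub>R d) \<bullet> d - G x \<bullet> d - L * s * (norm d)^2)) (at s)" for s
  proof -
    have d1: "((\<lambda>s::real. x + s *\<^sub>R d) has_derivative (\<lambda>s. s *\<^sub>R d)) (at s)"
      by (auto intro!: derivative_eq_intros)
    have "((\<lambda>s. F (x + s *\<^sub>R d)) has_derivative (\<lambda>h. G (x + s *\<^sub>R d) \<bullet> (h *\<^sub>R d))) (at s)"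
      using has_derivative_compose[OF d1 der[rule_format]] by (simp add: o_def)
    moreover have "(\<lambda>h. G (x + s *\<^sub>R d) \<bullet> (h *\<^sub>R d)) = (*) (G (x + s *\<^sub>R d) \<bullet> d)"
      by (auto simp: algebra_simps)
    ultimately have D1: "((\<lambda>s. F (x + s *\<^sub>R d)) has_real_derivative (G (x + s *\<^sub>R d) \<bullet> d)) (at s)"
      by (simp add: has_field_derivative_def)
    have D2: "((\<lambda>s. s * (G x \<bullet> d)) has_real_derivative (G x \<bullet> d)) (at s)"
      by (auto intro!: derivative_eq_intros)
    have D3: "((\<lambda>s. L / 2 * s^2 * (norm d)^2) has_real_derivative (L * s * (norm d)^2)) (at s)"
      by (auto intro!: derivative_eq_intros)
    show ?thesis unfolding \<phi>_def by (intro DERIV_diff D1 D2 D3)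
  qed
  have neg: "G (x + s *\<^sub>R d) \<bullet> d - G x \<bullet> d - L * s * (norm d)^2 \<le> 0" if "0 \<le> s" for s
  proof -
    have "G (x + s *\<^sub>R d) \<bullet> d - G x \<bullet> d = (G (x + s *\<^sub>R d) - G x) \<bullet> d" by (simp add: inner_diff_left)
    also have "\<dots> \<le> norm (G (x + s *\<^sub>R d) - G x) * norm d" by (rule norm_cauchy_schwarz)
    also have "\<dots> \<le> (L * norm (s *\<^sub>R d)) * norm d"
      using lip[rule_format, of "x + s *\<^sub>R d" x] by (simp add: mult_right_mono)
    also have "\<dots> = L * s * (norm d)^2" using that by (simp add: power2_eq_square)
    finally show ?thesis by simp
  qed
  have "\<phi> 1 \<le> \<phi> 0"
  proof (rule DERIV_nonpos_imp_nonincreasing[of 0 1])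
    fix s :: real assume "0 \<le> s" "s \<le> 1"
    then show "\<exists>y. (\<phi> has_real_derivative y) (at s) \<and> y \<le> 0" using D[of s] neg[of s] by blast
  qed simp
  then show ?thesis by (simp add: \<phi>_def d_def)
qed

lemma sum_mat_vec:
  fixes A :: "nat \<Rightarrow> real^'d^'d"
  assumes "finite J"
  shows "(\<Sum>j\<in>J. A j) *v h = (\<Sum>j\<in>J. A j *v h)"
  using assms by (induction J rule: finite_induct) (auto simp: matrix_vector_mult_add_rdistrib)

lemma hessJ_bound:
  fixes H :: "nat \<Rightarrow> real^'d \<Rightarrow> real^'d^'d"
  assumes J: "J \<subseteq> {..<n}" "J \<noteq> {}"
    and b: "\<forall>i<n. \<forall>x h. norm (H i x *v h) \<le> L * norm h"
  shows "norm (hessJ H J x *v h) \<le> L * norm h"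
proof -
  have fin: "finite J" using J finite_subset by blast
  then have cpos: "card J > 0" using J by (simp add: card_gt_0_iff)
  have "hessJ H J x *v h = (1 / real (card J)) *\<^sub>R (\<Sum>j\<in>J. H j x *v h)"
    unfolding hessJ_def scaleR_matrix_vector_assoc[symmetric] sum_mat_vec[OF fin] by (rule refl)
  then have "norm (hessJ H J x *v h) = (1 / real (card J)) * norm (\<Sum>j\<in>J. H j x *v h)"
    by simp
  also have "\<dots> \<le> (1 / real (card J)) * (\<Sum>j\<in>J. norm (H j x *v h))"
    by (intro mult_left_mono norm_sum) auto
  also have "\<dots> \<le> (1 / real (card J)) * (\<Sum>j\<in>J. L * norm h)"
    using J b by (intro mult_left_mono sum_mono) auto
  also have "\<dots> = L * norm h" using cpos by simp
  finally show ?thesis .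
qed

lemma norm_rad:
  fixes z :: "real^'d"
  assumes "\<forall>k. z $ k \<in> {-1, 1}"
  shows "norm z = sqrt (real CARD('d))"
proof -
  have "\<And>k. (z $ k)^2 = 1" using assms by (metis insert_iff empty_iff power2_minus one_power2)
  then show ?thesis by (simp add: norm_vec_def L2_set_def)
qed

lemma hutch_bound:
  fixes A :: "real^'d^'d" and z :: "real^'d"
  assumes "\<forall>k. z $ k \<in> {-1, 1}" and "\<forall>h. norm (A *v h) \<le> L * norm h"
  shows "\<bar>hutch A z $ k\<bar> \<le> sqrt (real CARD('d)) * L"
proof -
  have "z $ k = -1 \<or> z $ k = 1" using assms(1) by auto
  then have "\<bar>z $ k\<bar> = 1" by auto
  then have "\<bar>hutch A z $ k\<bar> = \<bar>(A *v z) $ k\<bar>" by (simp add: hutch_def abs_mult)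
  also have "\<dots> \<le> norm (A *v z)" by (rule component_le_norm_cart)
  also have "\<dots> \<le> L * norm z" using assms(2) by blast
  also have "\<dots> = sqrt (real CARD('d)) * L" using norm_rad[OF assms(1)] by simp
  finally show ?thesis .
qed

lemma coord:
  fixes a b d \<Delta> \<alpha> \<Gamma> \<eta> L :: real
  assumes "0 < \<alpha>" "\<alpha> \<le> d" "d \<le> \<Gamma>" "0 < \<eta>" "0 \<le> L" "\<Delta> = - \<eta> * b / d"
  shows "a * \<Delta> + L / 2 * \<Delta>^2 \<le> - \<eta> / (2 * \<Gamma>) * a^2 + \<eta> / (2 * \<alpha>) * (a - b)^2
           - (1 / (2 * \<eta>) - L / (2 * \<alpha>)) * (d * \<Delta>^2)"
proof -
  have dpos: "d > 0" using assms by linarith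
  have s1: "L / 2 * \<Delta>^2 \<le> L / (2 * \<alpha>) * (d * \<Delta>^2)"
  proof -
    have "L / 2 * \<Delta>^2 = L / (2 * \<alpha>) * (\<alpha> * \<Delta>^2)" using assms by simp
    also have "\<dots> \<le> L / (2 * \<alpha>) * (d * \<Delta>^2)"
      using assms by (intro mult_left_mono mult_right_mono) auto
    finally show ?thesis .
  qed
  have s2: "a * \<Delta> + 1 / (2 * \<eta>) * (d * \<Delta>^2) = \<eta> / (2 * d) * ((a - b)^2 - a^2)"
    unfolding assms(6) using assms dpos by (simp add: field_simps power2_eq_square)
  have s3: "\<eta> / (2 * d) * (a - b)^2 \<le> \<eta> / (2 * \<alpha>) * (a - b)^2"
    using assms dpos by (intro mult_right_mono divide_left_mono) auto
  have s4: "\<eta> / (2 * \<Gamma>) * a^2 \<le> \<eta> / (2 * d) * a^2"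
    using assms dpos by (intro mult_right_mono divide_left_mono) auto
  show ?thesis using s1 s2 s3 s4 by (simp add: algebra_simps)
qed



theorem lemma3:
  fixes f :: "nat \<Rightarrow> real^'d \<Rightarrow> real"
    and g :: "nat \<Rightarrow> real^'d \<Rightarrow> real^'d"
    and H :: "nat \<Rightarrow> real^'d \<Rightarrow> real^'d^'d"
    and n m :: nat
    and L \<mu> \<alpha> \<beta> \<eta> p :: real
    and wstar :: "real^'d"
    and w v D Dh :: "nat \<Rightarrow> real^'d"
    and z0 z :: "nat \<Rightarrow> real^'d"
    and J0 J :: "nat \<Rightarrow> nat set"
    and t :: nat
  assumes n_pos: "n \<ge> 1"
    and grad_f: "\<forall>i<n. \<forall>x. (f i has_derivative (\<lambda>h. g i x \<bullet> h)) (at x)"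
    and hess_f: "\<forall>i<n. \<forall>x. (g i has_derivative (\<lambda>h. H i x *v h)) (at x)"
    and smooth_f: "\<forall>i<n. \<forall>x y. norm (g i x - g i y) \<le> L * norm (x - y)"
    and smooth_P: "\<forall>x y. norm (avg_grad n g x - avg_grad n g y) \<le> L * norm (x - y)"
    and minimizer: "\<forall>x. avg_fun n f wstar \<le> avg_fun n f x"
    and PL: "\<forall>x. (norm (avg_grad n g x))^2 \<ge> 2 * \<mu> * (avg_fun n f x - avg_fun n f wstar)"
    and mu_pos: "\<mu> > 0"
    and alpha_pos: "\<alpha> > 0"
    and alpha_le_Gamma: "\<alpha> \<le> sqrt (real CARD('d)) * L"
    and beta: "0 < \<beta>" "\<beta> < 1"
    and m_pos: "m \<ge> 1"
    and eta_pos: "\<eta> > 0"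
    and p: "0 < p" "p \<le> 1"
    and z0_rad: "\<forall>j k. z0 j $ k \<in> {-1, 1}"
    and z_rad: "\<forall>s k. z s $ k \<in> {-1, 1}"
    and J0_idx: "\<forall>j. J0 j \<subseteq> {..<n} \<and> J0 j \<noteq> {}"
    and J_idx: "\<forall>s. J s \<subseteq> {..<n} \<and> J s \<noteq> {}"
    and D_0: "D 0 = (1 / real m) *\<^sub>R (\<Sum>j\<in>{1..m}. hutch (hessJ H (J0 j) (w 0)) (z0 j))"
    and D_Suc: "\<forall>s. D (Suc s) = \<beta> *\<^sub>R D s
                   + (1 - \<beta>) *\<^sub>R hutch (hessJ H (J (Suc s)) (w (Suc s))) (z (Suc s))"
    and Dh_def: "\<forall>s. Dh s = (\<chi> k. max \<alpha> \<bar>D s $ k\<bar>)"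
    and w_Suc: "\<forall>s. w (Suc s) = w s - \<eta> *\<^sub>R (\<chi> k. v s $ k / Dh s $ k)"
    and v_0: "v 0 = avg_grad n g (w 0)"
    and v_Suc: "\<forall>s. v (Suc s) = avg_grad n g (w (Suc s))
                   \<or> (\<exists>i<n. v (Suc s) = v s + g i (w (Suc s)) - g i (w s))"
  shows "avg_fun n f (w (Suc t)) - avg_fun n f wstar
           \<le> (1 - \<eta> * \<mu> / (sqrt (real CARD('d)) * L)) * (avg_fun n f (w t) - avg_fun n f wstar)
             + \<eta> / (2 * \<alpha>) * (norm (avg_grad n g (w t) - v t))^2
             - (1 / (2 * \<eta>) - L / (2 * \<alpha>)) * wnorm2 (Dh t) (w (Suc t) - w t)"
  
proof -
  define \<Gamma> where "\<Gamma> = sqrt (real CARD('d)) * L"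
  have sq_pos: "sqrt (real CARD('d)) > 0" by simp
  have Gpos: "\<Gamma> > 0" using alpha_pos alpha_le_Gamma unfolding \<Gamma>_def by linarith
  then have Lpos: "L > 0" using sq_pos unfolding \<Gamma>_def by (simp add: zero_less_mult_iff)
  have Hb: "\<forall>i<n. \<forall>x h. norm (H i x *v h) \<le> L * norm h"
    using opbound hess_f smooth_f by blast
  have hb: "\<bar>hutch (hessJ H J' x) zz $ k\<bar> \<le> \<Gamma>"
    if "J' \<subseteq> {..<n}" "J' \<noteq> {}" "\<forall>k. zz $ k \<in> {-1, 1}" for J' x zz k
    unfolding \<Gamma>_def
    by (rule hutch_bound[OF that(3)]) (use hessJ_bound[OF that(1,2) Hb] in blast)
  have Db: "\<forall>k. \<bar>D s $ k\<bar> \<le> \<Gamma>" for s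
  proof (induction s)
    case 0
    show ?case
    proof
      fix k
      have "D 0 $ k = (1 / real m) * (\<Sum>j\<in>{1..m}. hutch (hessJ H (J0 j) (w 0)) (z0 j) $ k)"
        by (simp add: D_0 sum_component)
      then have "\<bar>D 0 $ k\<bar> = (1 / real m) * \<bar>\<Sum>j\<in>{1..m}. hutch (hessJ H (J0 j) (w 0)) (z0 j) $ k\<bar>"
        by (simp add: abs_mult)
      also have "\<dots> \<le> (1 / real m) * (\<Sum>j\<in>{1..m}. \<bar>hutch (hessJ H (J0 j) (w 0)) (z0 j) $ k\<bar>)"
        by (intro mult_left_mono sum_abs) auto
      also have "\<dots> \<le> (1 / real m) * (\<Sum>j\<in>{1..m}. \<Gamma>)"
        using J0_idx z0_rad hb by (intro mult_left_mono sum_mono) auto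
      also have "\<dots> = \<Gamma>" using m_pos by simp
      finally show "\<bar>D 0 $ k\<bar> \<le> \<Gamma>" .
    qed
  next
    case (Suc s)
    show ?case
    proof
      fix k
      define q where "q = hutch (hessJ H (J (Suc s)) (w (Suc s))) (z (Suc s)) $ k"
      have q: "\<bar>q\<bar> \<le> \<Gamma>" unfolding q_def using J_idx z_rad hb by blast
      have "D (Suc s) $ k = \<beta> * D s $ k + (1 - \<beta>) * q" by (simp add: D_Suc q_def)
      then have "\<bar>D (Suc s) $ k\<bar> \<le> \<bar>\<beta> * D s $ k\<bar> + \<bar>(1 - \<beta>) * q\<bar>"
        by (simp only: abs_triangle_ineq)
      also have "\<dots> = \<beta> * \<bar>D s $ k\<bar> + (1 - \<beta>) * \<bar>q\<bar>"
        using beta by (simp add: abs_mult)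
      also have "\<dots> \<le> \<beta> * \<Gamma> + (1 - \<beta>) * \<Gamma>"
        using beta Suc q by (intro add_mono mult_left_mono) auto
      finally show "\<bar>D (Suc s) $ k\<bar> \<le> \<Gamma>" by (simp add: algebra_simps)
    qed
  qed
  have Dh_lo: "\<alpha> \<le> Dh t $ k" and Dh_hi: "Dh t $ k \<le> \<Gamma>" for k
    using Db[of t] alpha_le_Gamma Dh_def unfolding \<Gamma>_def by auto
  have derP: "\<forall>x. (avg_fun n f has_derivative (\<lambda>h. avg_grad n g x \<bullet> h)) (at x)"
  proof
    fix x
    have "((\<lambda>x. \<Sum>i<n. f i x) has_derivative (\<lambda>h. \<Sum>i<n. g i x \<bullet> h)) (at x)"
      by (rule has_derivative_sum) (use grad_f in auto)
    then have "((\<lambda>x. (1 / real n) * (\<Sum>i<n. f i x)) has_derivative (\<lambda>h. (1 / real n) * (\<Sum>i<n. g i x \<bullet> h))) (at x)"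
      by (rule has_derivative_mult_right)
    moreover have "(\<lambda>h. (1 / real n) * (\<Sum>i<n. g i x \<bullet> h)) = (\<lambda>h. avg_grad n g x \<bullet> h)"
      by (simp add: avg_grad_def inner_sum_left)
    ultimately show "(avg_fun n f has_derivative (\<lambda>h. avg_grad n g x \<bullet> h)) (at x)"
      by (simp add: avg_fun_def[abs_def])
  qed
  define a where "a = avg_grad n g (w t)"
  define b where "b = v t"
  define \<Delta> where "\<Delta> = w (Suc t) - w t"
  define Pd where "Pd = avg_fun n f (w t) - avg_fun n f wstar"
  have Dk: "\<Delta> $ k = - \<eta> * b $ k / Dh t $ k" for k
    unfolding \<Delta>_def b_def using w_Suc by simp
  have desc: "avg_fun n f (w (Suc t)) \<le> avg_fun n f (w t) + a \<bullet> \<Delta> + L / 2 * (norm \<Delta>)^2"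
    unfolding a_def \<Delta>_def by (rule descent[OF derP smooth_P])
  have e1: "a \<bullet> \<Delta> = (\<Sum>k\<in>UNIV. a $ k * \<Delta> $ k)" by (simp add: inner_vec_def)
  have e2: "(norm \<Delta>)^2 = (\<Sum>k\<in>UNIV. (\<Delta> $ k)^2)" unfolding power2_norm_eq_inner inner_vec_def by (simp add: power2_eq_square)
  have e3: "(norm (a - b))^2 = (\<Sum>k\<in>UNIV. (a $ k - b $ k)^2)" unfolding power2_norm_eq_inner inner_vec_def by (simp add: power2_eq_square)
  have e4: "(norm a)^2 = (\<Sum>k\<in>UNIV. (a $ k)^2)" unfolding power2_norm_eq_inner inner_vec_def by (simp add: power2_eq_square)
  have e5: "wnorm2 (Dh t) \<Delta> = (\<Sum>k\<in>UNIV. Dh t $ k * (\<Delta> $ k)^2)" by (simp add: wnorm2_def)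
  have cs: "(\<Sum>k\<in>UNIV. a $ k * \<Delta> $ k + L / 2 * (\<Delta> $ k)^2) \<le>
        (\<Sum>k\<in>UNIV. - \<eta> / (2 * \<Gamma>) * (a $ k)^2 + \<eta> / (2 * \<alpha>) * (a $ k - b $ k)^2
           - (1 / (2 * \<eta>) - L / (2 * \<alpha>)) * (Dh t $ k * (\<Delta> $ k)^2))"
    by (intro sum_mono coord[OF alpha_pos Dh_lo Dh_hi eta_pos] Dk) (use Lpos in auto)
  have cs2: "a \<bullet> \<Delta> + L / 2 * (norm \<Delta>)^2 \<le> - \<eta> / (2 * \<Gamma>) * (norm a)^2
      + \<eta> / (2 * \<alpha>) * (norm (a - b))^2 - (1 / (2 * \<eta>) - L / (2 * \<alpha>)) * wnorm2 (Dh t) \<Delta>"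
    using cs unfolding e1 e2 e3 e4 e5
    by (simp add: sum.distrib sum_subtractf sum_distrib_left sum_negf)
  have pl: "2 * \<mu> * Pd \<le> (norm a)^2" using PL unfolding a_def Pd_def by blast
  have "\<eta> / (2 * \<Gamma>) * (2 * \<mu> * Pd) \<le> \<eta> / (2 * \<Gamma>) * (norm a)^2"
    using pl eta_pos Gpos by (intro mult_left_mono) auto
  moreover have "\<eta> / (2 * \<Gamma>) * (2 * \<mu> * Pd) = \<eta> * \<mu> / \<Gamma> * Pd" using Gpos by (simp add: field_simps)
  ultimately have pl2: "\<eta> * \<mu> / \<Gamma> * Pd \<le> \<eta> / (2 * \<Gamma>) * (norm a)^2" by simp
  have "avg_fun n f (w (Suc t)) - avg_fun n f wstar \<le> (1 - \<eta> * \<mu> / \<Gamma>) * Pd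
      + \<eta> / (2 * \<alpha>) * (norm (a - b))^2 - (1 / (2 * \<eta>) - L / (2 * \<alpha>)) * wnorm2 (Dh t) \<Delta>"
    using desc cs2 pl2 unfolding Pd_def by (simp add: algebra_simps)
  then show ?thesis unfolding \<Gamma>_def Pd_def a_def b_def \<Delta>_def
    by (simp add: norm_minus_commute)
qed

end
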